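(* Let $T>0$, $0<\alpha<1$, $c,d,\lambda>0$, $u_0,u_1\in\mathbb{R}$, and consider \[ u''(t)+c\,u(t)=d\int_0^t e_{\alpha,\alpha}(-\lambda(t-s)^\alpha)\,u(s)\,ds,\quad t\in(0,T],\qquad u(0)=u_0,\ u'(0)=u_1 . \] Setting $z(t)=u''(t)$ (so that $u(t)=u_0+u_1t+\int_0^t(t-s)z(s)\,ds$), this problem can be rewritten as the integral equation \[ z(t)=\int_0^t\big\{d\,e_{\alpha,\alpha+2}(-\lambda(t-s)^\alpha)-c(t-s)\big\}z(s)\,ds+f(t), \] where \[ f(t)=d\,u_0\,e_{\alpha,\alpha+1}(-\lambda t^\alpha)+d\,u_1\,e_{\alpha,\alpha+2}(-\lambda t^\alpha)-c\,u_1t-c\,u_0 . \] Moreover, the problem has a unique solution $u\in C([0,T])$.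
   Context: The Mittag-Leffler function is $E_{\alpha,\beta}(z)=\sum_{k=0}^\infty \frac{z^k}{\Gamma(k\alpha+\beta)}$, and for $\beta>0$, $t>0$ one writes $e_{\alpha,\beta}(-\lambda t^\alpha):=t^{\beta-1}E_{\alpha,\beta}(-\lambda t^\alpha)$. *)

theory Defs
  imports "HOL-Analysis.Analysis"
begin

definition mittag_leffler :: "real \<Rightarrow> real \<Rightarrow> real \<Rightarrow> real" where
  "mittag_leffler \<alpha> \<beta> x = (\<Sum>k. x ^ k / Gamma (real k * \<alpha> + \<beta>))"

text \<open>e_{alpha,beta}(-lambda t^alpha) := t^(beta-1) E_{alpha,beta}(-lambda t^alpha).\<close>
definition ml_e :: "real \<Rightarrow> real \<Rightarrow> real \<Rightarrow> real \<Rightarrow> real" where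
  "ml_e \<alpha> \<beta> lam t = t powr (\<beta> - 1) * mittag_leffler \<alpha> \<beta> (- lam * t powr \<alpha>)"

definition is_solution_with ::
  "real \<Rightarrow> real \<Rightarrow> real \<Rightarrow> real \<Rightarrow> real \<Rightarrow> real \<Rightarrow> real \<Rightarrow>
   (real \<Rightarrow> real) \<Rightarrow> (real \<Rightarrow> real) \<Rightarrow> (real \<Rightarrow> real) \<Rightarrow> bool" where
  "is_solution_with T \<alpha> c d lam u0 u1 u du ddu \<longleftrightarrow>
     (\<forall>t\<in>{0..T}. (u has_real_derivative du t) (at t within {0..T}) \<and>
                  (du has_real_derivative ddu t) (at t within {0..T})) \<and>
     continuous_on {0..T} ddu \<and>
     (\<forall>t\<in>{0<..T}. ddu t + c * u t =
        d * integral {0..t} (\<lambda>s. ml_e \<alpha> \<alpha> lam (t - s) * u s)) \<and>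
     u 0 = u0 \<and> du 0 = u1"

definition is_solution ::
  "real \<Rightarrow> real \<Rightarrow> real \<Rightarrow> real \<Rightarrow> real \<Rightarrow> real \<Rightarrow> real \<Rightarrow> (real \<Rightarrow> real) \<Rightarrow> bool" where
  "is_solution T \<alpha> c d lam u0 u1 u \<longleftrightarrow> (\<exists>du ddu. is_solution_with T \<alpha> c d lam u0 u1 u du ddu)"

end

theory Submission
  imports Defs
begin


lemma Gamma_ratio_ln:
  fixes \<alpha> x :: real
  assumes "0 < \<alpha>" "\<alpha> < 1" "x > 0"
  shows "ln x + ln (Gamma x) \<le> ln (Gamma (x + \<alpha>)) + (1 - \<alpha>) * ln (x + \<alpha>)"
proof -
  have cv: "(ln \<circ> Gamma) ((1 - (1 - \<alpha>)) *\<^sub>R (x + \<alpha>) + (1 - \<alpha>) *\<^sub>R (x + \<alpha> + 1))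
      \<le> (1 - (1 - \<alpha>)) * (ln \<circ> Gamma) (x + \<alpha>) + (1 - \<alpha>) * (ln \<circ> Gamma) (x + \<alpha> + 1)"
    by (rule convex_onD[OF log_convex_Gamma_real]) (use assms in auto)
  have e1: "(1 - (1 - \<alpha>)) *\<^sub>R (x + \<alpha>) + (1 - \<alpha>) *\<^sub>R (x + \<alpha> + 1) = x + 1"
    by (simp add: algebra_simps)
  have nz: "x \<notin> \<int>\<^sub>\<le>\<^sub>0" "x + \<alpha> \<notin> \<int>\<^sub>\<le>\<^sub>0" using assms by (auto elim!: nonpos_Ints_cases)
  have g1: "Gamma (x + 1) = x * Gamma x" using Gamma_plus1[OF nz(1)] .
  have g2: "Gamma (x + \<alpha> + 1) = (x + \<alpha>) * Gamma (x + \<alpha>)" using Gamma_plus1[OF nz(2)] .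
  have p: "Gamma x > 0" "Gamma (x + \<alpha>) > 0" using assms by auto
  have "ln (Gamma (x + 1)) = ln x + ln (Gamma x)" proof -
    have "Gamma x \<noteq> 0" "x \<noteq> 0" using p(1) assms(3) by linarith+
    thus ?thesis unfolding g1 by (simp add: ln_mult)
  qed
  moreover have "ln (Gamma (x + \<alpha> + 1)) = ln (x + \<alpha>) + ln (Gamma (x + \<alpha>))"
    proof -
    have "Gamma (x + \<alpha>) \<noteq> 0" "x + \<alpha> \<noteq> 0" using p(2) assms by linarith+
    thus ?thesis unfolding g2 by (simp add: ln_mult)
  qed
  ultimately show ?thesis using cv unfolding e1 o_def by (simp add: algebra_simps)
qed

lemma ml_summable:
  fixes \<alpha> \<beta> y :: real
  assumes "0 < \<alpha>" "\<alpha> < 1" "\<beta> > 0"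
  shows "summable (\<lambda>k. y ^ k / Gamma (real k * \<alpha> + \<beta>))"
proof -
  define L where "L = ln 2 + ln (2 * \<bar>y\<bar> + 1)"
  obtain N :: nat where N: "real N \<ge> (exp (L / \<alpha>) + \<alpha> + 1) / \<alpha>"
    using real_arch_simple by blast
  show ?thesis
  proof (rule summable_ratio_test[of "1/2" N])
    fix n assume n: "n \<ge> N"
    define x where "x = real n * \<alpha> + \<beta>"
    have "real n * \<alpha> \<ge> real N * \<alpha>" using n assms by (simp add: mult_right_mono)
    moreover have "real N * \<alpha> \<ge> exp (L / \<alpha>) + \<alpha> + 1"
      using N assms by (simp add: field_simps)
    ultimately have xge: "x \<ge> exp (L / \<alpha>) + \<alpha> + 1" using assms unfolding x_def by linarith
    have xpos: "x > 0" "x \<ge> 1" "x \<ge> \<alpha>" using xge exp_gt_zero[of "L / \<alpha>"] assms by linarith+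
    have ex: "exp (L / \<alpha>) \<le> x" using xge assms by linarith
    have "ln (exp (L / \<alpha>)) \<le> ln x" using ex xpos by (subst ln_le_cancel_iff) auto
    hence lnx: "ln x \<ge> L / \<alpha>" by simp
    have "ln (x + \<alpha>) \<le> ln (2 * x)" using xpos assms by simp
    also have "\<dots> = ln 2 + ln x" using xpos by (simp add: ln_mult)
    finally have l2: "ln (x + \<alpha>) \<le> ln 2 + ln x" .
    have lnx0: "ln x \<ge> 0" "ln 2 \<ge> (0::real)" using xpos by auto
    have "(1 - \<alpha>) * ln (x + \<alpha>) \<le> (1 - \<alpha>) * (ln 2 + ln x)"
      using l2 assms by (intro mult_left_mono) auto
    also have "\<dots> \<le> ln 2 + ln x - \<alpha> * ln x" using assms lnx0 by (simp add: algebra_simps)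
    finally have A: "(1 - \<alpha>) * ln (x + \<alpha>) \<le> ln 2 + ln x - \<alpha> * ln x" .
    have B: "\<alpha> * ln x \<ge> L" using lnx assms by (simp add: field_simps)
    have C: "ln (Gamma (x + \<alpha>)) - ln (Gamma x) \<ge> ln (2 * \<bar>y\<bar> + 1)"
      using Gamma_ratio_ln[OF assms(1,2) xpos(1)] A B unfolding L_def by linarith
    have gp: "Gamma x > 0" "Gamma (x + \<alpha>) > 0" using xpos assms by auto
    have "ln ((2 * \<bar>y\<bar> + 1) * Gamma x) \<le> ln (Gamma (x + \<alpha>))"
      using C gp by (simp add: ln_mult)
    hence D: "(2 * \<bar>y\<bar> + 1) * Gamma x \<le> Gamma (x + \<alpha>)"
      using gp by (subst (asm) ln_le_cancel_iff) auto
    have xs: "real (Suc n) * \<alpha> + \<beta> = x + \<alpha>" unfolding x_def by (simp add: algebra_simps)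
    have "\<bar>y\<bar> ^ Suc n / Gamma (x + \<alpha>) \<le> 1 / 2 * (\<bar>y\<bar> ^ n / Gamma x)"
    proof -
      have "\<bar>y\<bar> ^ Suc n * (2 * Gamma x) \<le> \<bar>y\<bar> ^ n * Gamma (x + \<alpha>)"
      proof -
        have "(2 * \<bar>y\<bar>) * Gamma x \<le> (2 * \<bar>y\<bar> + 1) * Gamma x" using gp by (intro mult_right_mono) auto
        hence "\<bar>y\<bar> * (2 * Gamma x) \<le> Gamma (x + \<alpha>)" using D by (simp add: algebra_simps)
        hence "\<bar>y\<bar> ^ n * (\<bar>y\<bar> * (2 * Gamma x)) \<le> \<bar>y\<bar> ^ n * Gamma (x + \<alpha>)"
          by (intro mult_left_mono) auto
        thus ?thesis by (simp add: algebra_simps)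
      qed
      thus ?thesis using gp by (simp add: field_simps)
    qed
    thus "norm (y ^ Suc n / Gamma (real (Suc n) * \<alpha> + \<beta>)) \<le> 1 / 2 * norm (y ^ n / Gamma (real n * \<alpha> + \<beta>))"
      unfolding xs using gp by (simp add: x_def power_abs abs_divide abs_mult)
  qed simp
qed



definition mlc :: "real \<Rightarrow> real \<Rightarrow> nat \<Rightarrow> real" where
  "mlc \<alpha> \<beta> n = 1 / Gamma (real n * \<alpha> + \<beta>)"

lemma ml_eq_ps: "mittag_leffler \<alpha> \<beta> x = (\<Sum>n. mlc \<alpha> \<beta> n * x ^ n)"
  unfolding mittag_leffler_def mlc_def by simp

lemma mlc_summable:
  assumes "0 < \<alpha>" "\<alpha> < 1" "\<beta> > 0"
  shows "summable (\<lambda>n. mlc \<alpha> \<beta> n * y ^ n)"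
  using ml_summable[OF assms, of y] unfolding mlc_def by simp

lemma ml_deriv:
  assumes "0 < \<alpha>" "\<alpha> < 1" "\<beta> > 0"
  shows "(mittag_leffler \<alpha> \<beta> has_real_derivative (\<Sum>n. diffs (mlc \<alpha> \<beta>) n * x ^ n)) (at x)"
  unfolding ml_eq_ps[abs_def]
  by (rule termdiffs_strong_converges_everywhere) (rule mlc_summable[OF assms])

lemma ml_cont:
  assumes "0 < \<alpha>" "\<alpha> < 1" "\<beta> > 0"
  shows "continuous_on UNIV (mittag_leffler \<alpha> \<beta>)"
  using ml_deriv[OF assms] DERIV_isCont continuous_at_imp_continuous_on by blast

lemma ml_identity:
  assumes "0 < \<alpha>" "\<alpha> < 1" "\<beta> > 1"
  shows "(\<beta> - 1) * mittag_leffler \<alpha> \<beta> x + \<alpha> * (x * (\<Sum>n. diffs (mlc \<alpha> \<beta>) n * x ^ n))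
         = mittag_leffler \<alpha> (\<beta> - 1) x"
proof -
  have b0: "\<beta> > 0" using assms by simp
  define c where "c = mlc \<alpha> \<beta>"
  define D where "D = (\<Sum>n. diffs c n * x ^ n)"
  have S1: "(\<lambda>n. c n * x ^ n) sums mittag_leffler \<alpha> \<beta> x"
    unfolding ml_eq_ps c_def using mlc_summable[OF assms(1,2) b0] by (simp add: summable_sums)
  have "summable (\<lambda>n. diffs c n * x ^ n)"
    unfolding c_def by (rule termdiff_converges_all) (rule mlc_summable[OF assms(1,2) b0])
  hence "(\<lambda>n. diffs c n * x ^ n) sums D" unfolding D_def by (simp add: summable_sums)
  hence "(\<lambda>n. x * (diffs c n * x ^ n)) sums (x * D)" by (rule sums_mult)
  moreover have "(\<lambda>n. x * (diffs c n * x ^ n)) = (\<lambda>n. (\<lambda>k. real k * c k * x ^ k) (Suc n))"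
    by (auto simp: diffs_def fun_eq_iff algebra_simps)
  ultimately have "(\<lambda>n. (\<lambda>k. real k * c k * x ^ k) (Suc n)) sums (x * D)" by simp
  hence S2: "(\<lambda>k. real k * c k * x ^ k) sums (x * D)" by (subst (asm) sums_Suc_iff) simp
  have S: "(\<lambda>n. (\<beta> - 1) * (c n * x ^ n) + \<alpha> * (real n * c n * x ^ n)) sums
             ((\<beta> - 1) * mittag_leffler \<alpha> \<beta> x + \<alpha> * (x * D))"
    by (intro sums_add sums_mult S1 S2)
  have termeq: "(\<beta> - 1) * (c n * x ^ n) + \<alpha> * (real n * c n * x ^ n)
        = x ^ n / Gamma (real n * \<alpha> + (\<beta> - 1))" for n
  proof -
    define y where "y = real n * \<alpha> + (\<beta> - 1)"
    have y0: "y > 0" using assms unfolding y_def by (simp add: add_nonneg_pos)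
    hence nz: "y \<notin> \<int>\<^sub>\<le>\<^sub>0" by (auto elim!: nonpos_Ints_cases)
    have g: "Gamma (real n * \<alpha> + \<beta>) = y * Gamma y"
      using Gamma_plus1[OF nz] unfolding y_def by (simp add: algebra_simps)
    have gp: "Gamma y > 0" using y0 by simp
    have "(\<beta> - 1) * (c n * x ^ n) + \<alpha> * (real n * c n * x ^ n) = y * c n * x ^ n"
      unfolding y_def by (simp add: algebra_simps)
    also have "\<dots> = x ^ n / Gamma y" unfolding c_def mlc_def g using y0 gp by (simp add: field_simps)
    finally show ?thesis unfolding y_def .
  qed
  have "(\<lambda>n. x ^ n / Gamma (real n * \<alpha> + (\<beta> - 1))) sums ((\<beta> - 1) * mittag_leffler \<alpha> \<beta> x + \<alpha> * (x * D))"
    using S unfolding termeq .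
  hence "mittag_leffler \<alpha> (\<beta> - 1) x = (\<beta> - 1) * mittag_leffler \<alpha> \<beta> x + \<alpha> * (x * D)"
    unfolding mittag_leffler_def by (simp add: sums_iff)
  thus ?thesis unfolding D_def c_def by simp
qed

lemma ml_e_deriv:
  assumes "0 < \<alpha>" "\<alpha> < 1" "\<beta> > 1" "r > 0"
  shows "(ml_e \<alpha> \<beta> lam has_real_derivative ml_e \<alpha> (\<beta> - 1) lam r) (at r)"
proof -
  have b0: "\<beta> > 0" using assms by simp
  define x where "x = - lam * r powr \<alpha>"
  define D where "D = (\<Sum>n. diffs (mlc \<alpha> \<beta>) n * x ^ n)"
  have A: "((\<lambda>t. t powr (\<beta> - 1)) has_real_derivative (\<beta> - 1) * r powr (\<beta> - 1 - 1)) (at r)"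
    by (rule has_real_derivative_powr) (use assms in simp)
  have B0: "((\<lambda>t. t powr \<alpha>) has_real_derivative \<alpha> * r powr (\<alpha> - 1)) (at r)"
    by (rule has_real_derivative_powr) (use assms in simp)
  have B: "((\<lambda>t. - lam * t powr \<alpha>) has_real_derivative - lam * (\<alpha> * r powr (\<alpha> - 1))) (at r)"
    by (intro DERIV_cmult B0)
  have C: "((\<lambda>t. mittag_leffler \<alpha> \<beta> (- lam * t powr \<alpha>)) has_real_derivative
             D * (- lam * (\<alpha> * r powr (\<alpha> - 1)))) (at r)"
    unfolding D_def x_def by (rule DERIV_chain2[OF ml_deriv[OF assms(1,2) b0] B])
  have M: "((\<lambda>t. t powr (\<beta> - 1) * mittag_leffler \<alpha> \<beta> (- lam * t powr \<alpha>)) has_real_derivative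
      (\<beta> - 1) * r powr (\<beta> - 1 - 1) * mittag_leffler \<alpha> \<beta> (- lam * r powr \<alpha>)
      + r powr (\<beta> - 1) * (D * (- lam * (\<alpha> * r powr (\<alpha> - 1))))) (at r)"
    by (rule DERIV_cong[OF DERIV_mult[OF A C]]) (simp add: algebra_simps)
  have pw: "r powr (\<beta> - 1) * r powr (\<alpha> - 1) = r powr (\<beta> - 1 - 1) * r powr \<alpha>"
    by (simp add: powr_add[symmetric] algebra_simps)
  have "(\<beta> - 1) * r powr (\<beta> - 1 - 1) * mittag_leffler \<alpha> \<beta> (- lam * r powr \<alpha>)
      + r powr (\<beta> - 1) * (D * (- lam * (\<alpha> * r powr (\<alpha> - 1))))
      = r powr (\<beta> - 1 - 1) * ((\<beta> - 1) * mittag_leffler \<alpha> \<beta> x + \<alpha> * (x * D))"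
  proof -
    have "r powr (\<beta> - 1) * (D * (- lam * (\<alpha> * r powr (\<alpha> - 1))))
        = (r powr (\<beta> - 1) * r powr (\<alpha> - 1)) * (D * (- lam * \<alpha>))" by (simp add: algebra_simps)
    also have "\<dots> = (r powr (\<beta> - 1 - 1) * r powr \<alpha>) * (D * (- lam * \<alpha>))" unfolding pw ..
    also have "\<dots> = r powr (\<beta> - 1 - 1) * (\<alpha> * (x * D))" unfolding x_def by (simp add: algebra_simps)
    finally have E: "r powr (\<beta> - 1) * (D * (- lam * (\<alpha> * r powr (\<alpha> - 1)))) = r powr (\<beta> - 1 - 1) * (\<alpha> * (x * D))" .
    have F: "r powr (\<beta> - 1 - 1) * ((\<beta> - 1) * mittag_leffler \<alpha> \<beta> x + \<alpha> * (x * D))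
       = (\<beta> - 1) * r powr (\<beta> - 1 - 1) * mittag_leffler \<alpha> \<beta> x + r powr (\<beta> - 1 - 1) * (\<alpha> * (x * D))"
      by (simp add: algebra_simps)
    show ?thesis using E F unfolding x_def by linarith
  qed
  also have "\<dots> = ml_e \<alpha> (\<beta> - 1) lam r"
    unfolding ml_e_def D_def using ml_identity[OF assms(1,2,3), of x] by (simp add: x_def)
  finally show ?thesis using M unfolding ml_e_def[abs_def] by simp
qed

lemma ml_e_zero [simp]: "ml_e \<alpha> \<beta> lam 0 = 0"
  unfolding ml_e_def by simp

lemma ml_e_cont:
  assumes "0 < \<alpha>" "\<alpha> < 1" "\<beta> > 1"
  shows "continuous_on {0..} (ml_e \<alpha> \<beta> lam)"
proof -
  have b0: "\<beta> > 0" using assms by simp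
  have c1: "continuous_on {0..} (\<lambda>t::real. t powr (\<beta> - 1))"
    by (rule continuous_on_powr') (use assms in \<open>auto intro!: continuous_intros\<close>)
  have c2: "continuous_on {0..} (\<lambda>t::real. t powr \<alpha>)"
    by (rule continuous_on_powr') (use assms in \<open>auto intro!: continuous_intros\<close>)
  have c3: "continuous_on {0..} (\<lambda>t. mittag_leffler \<alpha> \<beta> (- lam * t powr \<alpha>))"
    by (rule continuous_on_compose2[OF ml_cont[OF assms(1,2) b0]]) (auto intro!: continuous_intros c2)
  show ?thesis unfolding ml_e_def[abs_def] by (intro continuous_on_mult c1 c3)
qed



lemma e1_deriv:
  assumes "0 < \<alpha>" "\<alpha> < 1" "r > 0"
  shows "(ml_e \<alpha> (\<alpha> + 1) lam has_real_derivative ml_e \<alpha> \<alpha> lam r) (at r)"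
  using ml_e_deriv[OF assms(1,2) _ assms(3), of "\<alpha> + 1" lam] assms by simp

lemma e2_deriv:
  assumes "0 < \<alpha>" "\<alpha> < 1" "r > 0"
  shows "(ml_e \<alpha> (\<alpha> + 2) lam has_real_derivative ml_e \<alpha> (\<alpha> + 1) lam r) (at r)"
  using ml_e_deriv[OF assms(1,2) _ assms(3), of "\<alpha> + 2" lam] assms by (simp add: algebra_simps)

lemma ml_e_cont_shift:
  assumes "0 < \<alpha>" "\<alpha> < 1" "\<beta> > 1" "t \<le> T"
  shows "continuous_on {0..t} (\<lambda>s. ml_e \<alpha> \<beta> lam (t - s))"
  by (rule continuous_on_compose2[OF ml_e_cont[OF assms(1-3)]]) (auto intro!: continuous_intros)

lemma shift_deriv:
  assumes "(f has_real_derivative f') (at (t - s))"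
  shows "((\<lambda>s. f (t - s)) has_real_derivative - f') (at s)"
proof -
  have "((\<lambda>s. t - s) has_real_derivative -1) (at s)" by (auto intro!: derivative_eq_intros)
  from DERIV_chain2[OF assms this] show ?thesis by simp
qed

locale sol_data =
  fixes T \<alpha> lam :: real and u du ddu :: "real \<Rightarrow> real"
  assumes a0: "0 < \<alpha>" and a1: "\<alpha> < 1"
  and D1: "\<forall>t\<in>{0..T}. (u has_real_derivative du t) (at t within {0..T})"
  and D2: "\<forall>t\<in>{0..T}. (du has_real_derivative ddu t) (at t within {0..T})"
  and C: "continuous_on {0..T} ddu"
begin

lemma cu: "continuous_on {0..T} u"
  using D1 by (intro DERIV_continuous_on) auto

lemma cdu: "continuous_on {0..T} du"
  using D2 by (intro DERIV_continuous_on) auto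

lemma du_at: assumes "0 < s" "s < T" shows "(u has_real_derivative du s) (at s)"
proof -
  have "(u has_real_derivative du s) (at s within {0..T})" using D1 assms by auto
  thus ?thesis using at_within_Icc_at[of 0 s T] assms by simp
qed

lemma ddu_at: assumes "0 < s" "s < T" shows "(du has_real_derivative ddu s) (at s)"
proof -
  have "(du has_real_derivative ddu s) (at s within {0..T})" using D2 assms by auto
  thus ?thesis using at_within_Icc_at[of 0 s T] assms by simp
qed

lemma taylor:
  assumes t: "t \<in> {0..T}"
  shows "((\<lambda>s. (t - s) * ddu s) has_integral (u t - u 0 - du 0 * t)) {0..t}"
proof -
  define H where "H = (\<lambda>s. u s + (t - s) * du s)"
  have sub: "{0..t} \<subseteq> {0..T}" using t by auto
  have cH: "continuous_on {0..t} H" unfolding H_def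
    using continuous_on_subset[OF cu sub] continuous_on_subset[OF cdu sub]
    by (auto intro!: continuous_intros)
  have dH: "(H has_vector_derivative (t - s) * ddu s) (at s)" if s: "s \<in> {0<..<t}" for s
  proof -
    have "0 < s" "s < T" using s t by auto
    note d1 = du_at[OF this] and d2 = ddu_at[OF this]
    have dm: "((\<lambda>s. (t - s) * du s) has_real_derivative (t - s) * ddu s + (-1) * du s) (at s)"
      by (rule DERIV_mult'[OF _ d2]) (auto intro!: derivative_eq_intros)
    have "(H has_real_derivative du s + ((t - s) * ddu s + (-1) * du s)) (at s)"
      unfolding H_def by (rule DERIV_add[OF d1 dm])
    thus ?thesis by (simp add: has_real_derivative_iff_has_vector_derivative algebra_simps)
  qed
  have "((\<lambda>s. (t - s) * ddu s) has_integral (H t - H 0)) {0..t}"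
    by (rule fundamental_theorem_of_calculus_interior[OF _ cH dH]) (use t in auto)
  thus ?thesis unfolding H_def by (simp add: algebra_simps)
qed

lemma byparts:
  assumes t: "t \<in> {0<..T}"
  shows "((\<lambda>s. ml_e \<alpha> \<alpha> lam (t - s) * u s) has_integral
           (u 0 * ml_e \<alpha> (\<alpha> + 1) lam t + du 0 * ml_e \<alpha> (\<alpha> + 2) lam t
            + integral {0..t} (\<lambda>s. ml_e \<alpha> (\<alpha> + 2) lam (t - s) * ddu s))) {0..t}"
proof -
  define e0 where "e0 = ml_e \<alpha> \<alpha> lam"
  define e1 where "e1 = ml_e \<alpha> (\<alpha> + 1) lam"
  define e2 where "e2 = ml_e \<alpha> (\<alpha> + 2) lam"
  define G where "G = (\<lambda>s. - (e1 (t - s) * u s) - e2 (t - s) * du s)"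
  have sub: "{0..t} \<subseteq> {0..T}" using t by auto
  have tT: "t \<le> T" using t by auto
  have ce1: "continuous_on {0..t} (\<lambda>s. e1 (t - s))" unfolding e1_def
    by (rule ml_e_cont_shift[OF a0 a1 _ tT]) (use a0 in simp)
  have ce2: "continuous_on {0..t} (\<lambda>s. e2 (t - s))" unfolding e2_def
    by (rule ml_e_cont_shift[OF a0 a1 _ tT]) (use a0 in simp)
  have cG: "continuous_on {0..t} G" unfolding G_def
    using continuous_on_subset[OF cu sub] continuous_on_subset[OF cdu sub] ce1 ce2
    by (auto intro!: continuous_intros)
  have dG: "(G has_vector_derivative (e0 (t - s) * u s - e2 (t - s) * ddu s)) (at s)"
    if s: "s \<in> {0<..<t}" for s
  proof -
    have "0 < s" "s < T" using s t by auto
    note d1 = du_at[OF this] and d2 = ddu_at[OF this]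
    have ts: "t - s > 0" using s by auto
    have de1: "((\<lambda>s. e1 (t - s)) has_real_derivative - e0 (t - s)) (at s)"
      unfolding e1_def e0_def by (rule shift_deriv, rule e1_deriv[OF a0 a1 ts])
    have de2: "((\<lambda>s. e2 (t - s)) has_real_derivative - e1 (t - s)) (at s)"
      unfolding e1_def e2_def by (rule shift_deriv, rule e2_deriv[OF a0 a1 ts])
    have "(G has_real_derivative
       - (- e0 (t - s) * u s + du s * e1 (t - s)) - (- e1 (t - s) * du s + ddu s * e2 (t - s))) (at s)"
      unfolding G_def by (intro DERIV_diff DERIV_minus DERIV_mult de1 de2 d1 d2)
    thus ?thesis by (simp add: has_real_derivative_iff_has_vector_derivative algebra_simps)
  qed
  have I1: "((\<lambda>s. e0 (t - s) * u s - e2 (t - s) * ddu s) has_integral (G t - G 0)) {0..t}"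
    by (rule fundamental_theorem_of_calculus_interior[OF _ cG dG]) (use t in auto)
  have "(\<lambda>s. e2 (t - s) * ddu s) integrable_on {0..t}"
    by (rule integrable_continuous_interval)
       (use continuous_on_subset[OF C sub] ce2 in \<open>auto intro!: continuous_intros\<close>)
  hence I2: "((\<lambda>s. e2 (t - s) * ddu s) has_integral integral {0..t} (\<lambda>s. e2 (t - s) * ddu s)) {0..t}"
    by (simp add: integrable_integral)
  have "((\<lambda>s. (e0 (t - s) * u s - e2 (t - s) * ddu s) + e2 (t - s) * ddu s) has_integral
          (G t - G 0 + integral {0..t} (\<lambda>s. e2 (t - s) * ddu s))) {0..t}"
    by (rule has_integral_add[OF I1 I2])
  moreover have "G t = 0" unfolding G_def e1_def e2_def by simp
  moreover have "G 0 = - (e1 t * u 0) - e2 t * du 0" unfolding G_def by simp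
  ultimately show ?thesis unfolding e0_def e1_def e2_def by (simp add: algebra_simps)
qed

end



lemma cont_bounded:
  fixes f :: "real \<Rightarrow> real"
  assumes "continuous_on {a..b} f"
  shows "\<exists>B\<ge>0. \<forall>t\<in>{a..b}. \<bar>f t\<bar> \<le> B"
proof -
  have "bounded (f ` {a..b})"
    by (rule compact_imp_bounded, rule compact_continuous_image[OF assms]) simp
  then obtain B where "B > 0" "\<forall>x\<in>f ` {a..b}. norm x \<le> B" by (auto simp: bounded_pos)
  thus ?thesis by (intro exI[of _ B]) auto
qed

lemma power_integral:
  fixes t :: real
  assumes "t \<ge> 0"
  shows "((\<lambda>s. C * s ^ n / fact n) has_integral (C * t ^ Suc n / fact (Suc n))) {0..t}"
proof -
  have "((\<lambda>s. C * s ^ n / fact n) has_integral (C * t ^ Suc n / fact (Suc n) - C * 0 ^ Suc n / fact (Suc n))) {0..t}"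
  proof (rule fundamental_theorem_of_calculus[OF assms])
    fix x :: real
    have "((\<lambda>s. s ^ Suc n) has_real_derivative real (Suc n) * x ^ n) (at x)"
      using DERIV_pow[of "Suc n" x] by simp
    hence "((\<lambda>s. C * s ^ Suc n / fact (Suc n)) has_real_derivative C * (real (Suc n) * x ^ n) / fact (Suc n)) (at x)"
      by (intro DERIV_cdivide DERIV_cmult)
    hence "((\<lambda>s. C * s ^ Suc n / fact (Suc n)) has_real_derivative C * (real (Suc n) * x ^ n) / fact (Suc n)) (at x within {0..t})"
      by (rule has_field_derivative_at_within)
    moreover have "C * (real (Suc n) * x ^ n) / fact (Suc n) = C * x ^ n / fact n"
      by (simp add: fact_Suc field_simps del: of_nat_Suc)
    ultimately show "((\<lambda>s. C * s ^ Suc n / fact (Suc n)) has_vector_derivative C * x ^ n / fact n) (at x within {0..t})"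
      by (simp add: has_real_derivative_iff_has_vector_derivative)
  qed
  thus ?thesis by simp
qed

lemma zero_at_left_end:
  fixes h :: "real \<Rightarrow> real"
  assumes T: "T > 0" and c: "continuous_on {0..T} h" and z: "\<forall>t\<in>{0<..T}. h t = 0"
  shows "h 0 = 0"
proof -
  have "(h \<longlongrightarrow> h 0) (at 0 within {0..T})"
    using c T by (simp add: continuous_on_def)
  hence "(h \<longlongrightarrow> h 0) (at 0 within {0<..T})"
    by (rule tendsto_within_subset) auto
  moreover have "(h \<longlongrightarrow> 0) (at 0 within {0<..T})"
  proof (rule tendsto_eventually)
    show "eventually (\<lambda>x. h x = 0) (at 0 within {0<..T})"
      unfolding eventually_at_filter using z by auto
  qed
  moreover have "at (0::real) within {0<..T} \<noteq> bot"
    using T by (subst at_within_eq_bot_iff) (auto simp: closure_greaterThanAtMost)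
  ultimately show ?thesis using tendsto_unique by blast
qed

locale volt =
  fixes T M :: real and K :: "real \<Rightarrow> real"
  assumes T: "T > 0" and cK: "continuous_on {0..T} K" and K0: "K 0 = 0"
  and KM: "\<forall>r\<in>{0..T}. \<bar>K r\<bar> \<le> M"
begin

definition A :: "(real \<Rightarrow> real) \<Rightarrow> real \<Rightarrow> real" where
  "A z t = integral {0..t} (\<lambda>s. K (t - s) * z s)"

lemma M0: "M \<ge> 0" using KM T by force

lemma cK_shift: "t \<le> T \<Longrightarrow> continuous_on {0..t} (\<lambda>s. K (t - s))"
  by (rule continuous_on_compose2[OF cK]) (auto intro!: continuous_intros)

lemma A_integrable:
  assumes z: "continuous_on {0..T} z" and t: "t \<le> T"
  shows "(\<lambda>s. K (t - s) * z s) integrable_on {0..t}"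
  by (rule integrable_continuous_interval)
     (use continuous_on_subset[OF z, of "{0..t}"] cK_shift[OF t] t in \<open>auto intro!: continuous_intros\<close>)

lemma A_diff:
  assumes "continuous_on {0..T} z1" "continuous_on {0..T} z2" "t \<le> T"
  shows "A (\<lambda>s. z1 s - z2 s) t = A z1 t - A z2 t"
proof -
  have "A (\<lambda>s. z1 s - z2 s) t = integral {0..t} (\<lambda>s. K (t - s) * z1 s - K (t - s) * z2 s)"
    unfolding A_def by (simp add: algebra_simps)
  also have "\<dots> = A z1 t - A z2 t"
    unfolding A_def by (rule integral_diff) (use A_integrable assms in auto)
  finally show ?thesis .
qed

lemma A_bound:
  assumes z: "continuous_on {0..T} z" and t: "t \<in> {0..T}"
    and g: "continuous_on {0..t} g" and zg: "\<forall>s\<in>{0..t}. \<bar>z s\<bar> \<le> g s"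
  shows "\<bar>A z t\<bar> \<le> M * integral {0..t} g"
proof -
  have gi: "(\<lambda>s. M * g s) integrable_on {0..t}"
    by (rule integrable_continuous_interval) (use g in \<open>auto intro!: continuous_intros\<close>)
  have "norm (A z t) \<le> integral {0..t} (\<lambda>s. M * g s)"
    unfolding A_def
  proof (rule integral_norm_bound_integral[OF A_integrable[OF z] gi])
    show "t \<le> T" using t by auto
    fix s assume s: "s \<in> {0..t}"
    have "\<bar>K (t - s)\<bar> \<le> M" using KM s t by auto
    moreover have "\<bar>z s\<bar> \<le> g s" using zg s by auto
    ultimately show "norm (K (t - s) * z s) \<le> M * g s"
      by (simp add: abs_mult mult_mono')
  qed
  thus ?thesis by simp
qed

lemma A_alt:
  assumes z: "continuous_on {0..T} z" and t: "t \<in> {0..T}"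
  shows "A z t = integral {0..T} (\<lambda>s. K (max (t - s) 0) * z s)"
proof -
  have ck: "continuous_on {0..T} (\<lambda>s. K (max (t - s) 0))"
    by (rule continuous_on_compose2[OF cK]) (use t in \<open>auto intro!: continuous_intros\<close>)
  have int: "(\<lambda>s. K (max (t - s) 0) * z s) integrable_on {0..T}"
    by (rule integrable_continuous_interval) (use ck z in \<open>auto intro!: continuous_intros\<close>)
  have "integral {0..T} (\<lambda>s. K (max (t - s) 0) * z s)
     = integral {0..t} (\<lambda>s. K (max (t - s) 0) * z s) + integral {t..T} (\<lambda>s. K (max (t - s) 0) * z s)"
    using Henstock_Kurzweil_Integration.integral_combine[OF _ _ int, of t] t by simp
  also have "integral {t..T} (\<lambda>s. K (max (t - s) 0) * z s) = integral {t..T} (\<lambda>s. 0)"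
    by (rule integral_cong) (simp add: K0)
  also have "integral {0..t} (\<lambda>s. K (max (t - s) 0) * z s) = A z t"
    unfolding A_def by (rule integral_cong) simp
  finally show ?thesis by simp
qed

lemma A_cont:
  assumes z: "continuous_on {0..T} z"
  shows "continuous_on {0..T} (A z)"
proof -
  have "continuous_on ({0..T} \<times> cbox 0 T) (\<lambda>(t, s). K (max (t - s) 0) * z s)"
  proof -
    have c1: "continuous_on ({0..T} \<times> {0..T}) (\<lambda>p::real\<times>real. K (max (fst p - snd p) 0))"
      by (rule continuous_on_compose2[OF cK]) (auto intro!: continuous_intros)
    have c2: "continuous_on ({0..T} \<times> {0..T}) (\<lambda>p::real\<times>real. z (snd p))"
      by (rule continuous_on_compose2[OF z]) (auto intro!: continuous_intros)
    show ?thesis using continuous_on_mult[OF c1 c2] by (simp add: case_prod_beta)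
  qed
  hence "continuous_on {0..T} (\<lambda>t. integral (cbox 0 T) (\<lambda>s. K (max (t - s) 0) * z s))"
    by (rule integral_continuous_on_param)
  thus ?thesis by (rule continuous_on_eq) (use A_alt[OF z] in auto)
qed

lemma iter_bound:
  fixes w :: "nat \<Rightarrow> real \<Rightarrow> real"
  assumes cw: "\<And>n. continuous_on {0..T} (w n)"
    and w0: "\<forall>t\<in>{0..T}. \<bar>w 0 t\<bar> \<le> B"
    and ws: "\<And>n. \<forall>t\<in>{0..T}. w (Suc n) t = A (w n) t"
  shows "\<forall>t\<in>{0..T}. \<bar>w n t\<bar> \<le> B * M ^ n * t ^ n / fact n"
proof (induction n)
  case 0 thus ?case using w0 by simp
next
  case (Suc n)
  show ?case
  proof
    fix t assume t: "t \<in> {0..T}"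
    have g: "continuous_on {0..t} (\<lambda>s. (B * M ^ n) * s ^ n / fact n)"
      by (auto intro!: continuous_intros)
    have "\<bar>w (Suc n) t\<bar> = \<bar>A (w n) t\<bar>" using ws t by auto
    also have "\<dots> \<le> M * integral {0..t} (\<lambda>s. (B * M ^ n) * s ^ n / fact n)"
      by (rule A_bound[OF cw t g]) (use Suc t in auto)
    also have "integral {0..t} (\<lambda>s. (B * M ^ n) * s ^ n / fact n) = (B * M ^ n) * t ^ Suc n / fact (Suc n)"
      using t by (intro integral_unique power_integral) auto
    finally show "\<bar>w (Suc n) t\<bar> \<le> B * M ^ Suc n * t ^ Suc n / fact (Suc n)"
      by (simp add: algebra_simps)
  qed
qed

lemma fact_bound_zero:
  fixes B x :: real
  assumes "\<forall>n. \<bar>y\<bar> \<le> B * x ^ n / fact n"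
  shows "y = 0"
proof -
  have "(\<lambda>n. x ^ n / fact n) \<longlonglongrightarrow> 0"
  proof (rule summable_LIMSEQ_zero)
    have "summable (\<lambda>n. inverse (fact n) * x ^ n)" by (rule summable_exp)
    thus "summable (\<lambda>n. x ^ n / fact n)" by (simp add: divide_inverse mult.commute)
  qed
  hence "(\<lambda>n. B * (x ^ n / fact n)) \<longlonglongrightarrow> B * 0" by (intro tendsto_mult tendsto_const)
  hence "(\<lambda>n. B * (x ^ n / fact n)) \<longlonglongrightarrow> 0" by simp
  hence "\<bar>y\<bar> \<le> 0"
    by (rule LIMSEQ_le_const) (use assms in \<open>auto simp: algebra_simps\<close>)
  thus ?thesis by simp
qed

lemma uniq:
  assumes c1: "continuous_on {0..T} z1" and c2: "continuous_on {0..T} z2"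
    and e1: "\<forall>t\<in>{0<..T}. z1 t = A z1 t + f t" and e2: "\<forall>t\<in>{0<..T}. z2 t = A z2 t + f t"
  shows "\<forall>t\<in>{0..T}. z1 t = z2 t"
proof -
  define w where "w = (\<lambda>s. z1 s - z2 s)"
  have cw: "continuous_on {0..T} w" unfolding w_def using c1 c2 by (auto intro!: continuous_intros)
  have eq': "\<forall>t\<in>{0<..T}. w t - A w t = 0"
    unfolding w_def using e1 e2 A_diff[OF c1 c2] by auto
  have "(\<lambda>t. w t - A w t) 0 = 0"
    by (rule zero_at_left_end[OF T _ eq']) (use cw A_cont[OF cw] in \<open>auto intro!: continuous_intros\<close>)
  hence eq: "\<forall>t\<in>{0..T}. w t = A w t" using eq' by (auto simp: le_less)
  obtain B where B: "\<forall>t\<in>{0..T}. \<bar>w t\<bar> \<le> B" using cont_bounded[OF cw] by auto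
  have H: "\<forall>n. \<forall>t\<in>{0..T}. \<bar>w t\<bar> \<le> B * M ^ n * t ^ n / fact n"
    using iter_bound[of "\<lambda>n. w"] cw B eq by auto
  have "\<forall>t\<in>{0..T}. w t = 0"
  proof (intro ballI)
    fix t assume "t \<in> {0..T}"
    have "\<forall>n. \<bar>w t\<bar> \<le> B * (M * t) ^ n / fact n"
    proof (intro allI)
      fix n
      have "\<bar>w t\<bar> \<le> B * M ^ n * t ^ n / fact n" using H \<open>t \<in> {0..T}\<close> by blast
      also have "\<dots> = B * (M * t) ^ n / fact n" by (simp add: power_mult_distrib mult.assoc)
      finally show "\<bar>w t\<bar> \<le> B * (M * t) ^ n / fact n" .
    qed
    thus "w t = 0" by (rule fact_bound_zero)
  qed
  thus ?thesis unfolding w_def by auto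
qed

end



lemma small_zero:
  fixes x C :: real
  assumes C: "C > 0" and h: "\<And>e. e > 0 \<Longrightarrow> \<bar>x\<bar> \<le> e * C"
  shows "x = 0"
proof (rule ccontr)
  assume "x \<noteq> 0"
  hence xp: "\<bar>x\<bar> > 0" by simp
  have "\<bar>x\<bar> \<le> (\<bar>x\<bar> / (2 * C)) * C" using h[of "\<bar>x\<bar> / (2 * C)"] xp C by simp
  also have "\<dots> = \<bar>x\<bar> / 2" using C by simp
  finally show False using xp by simp
qed

context volt
begin

lemma exist:
  assumes cf: "continuous_on {0..T} f"
  shows "\<exists>z. continuous_on {0..T} z \<and> (\<forall>t\<in>{0..T}. z t = A z t + f t)"
proof -
  define P where "P = (\<lambda>z t. A z t + f t)"
  define zs where "zs n = (P ^^ n) f" for n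
  have zs0: "zs 0 = f" and zsS: "zs (Suc n) = (\<lambda>t. A (zs n) t + f t)" for n
    unfolding zs_def P_def by simp_all
  have cz: "continuous_on {0..T} (zs n)" for n
    by (induction n) (auto simp: zs0 zsS cf intro!: continuous_intros A_cont)
  define w where "w n t = zs (Suc n) t - zs n t" for n t
  have cw: "continuous_on {0..T} (w n)" for n
    unfolding w_def using cz by (auto intro!: continuous_intros)
  have wS: "\<forall>t\<in>{0..T}. w (Suc n) t = A (w n) t" for n
  proof
    fix t assume t: "t \<in> {0..T}"
    have "w (Suc n) t = A (zs (Suc n)) t - A (zs n) t" unfolding w_def zsS by simp
    also have "\<dots> = A (w n) t" unfolding w_def using A_diff[OF cz cz, of t "Suc n" n] t by simp
    finally show "w (Suc n) t = A (w n) t" .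
  qed
  obtain B where B0: "B \<ge> 0" and B: "\<forall>t\<in>{0..T}. \<bar>w 0 t\<bar> \<le> B" using cont_bounded[OF cw[of 0]] by auto
  have wb: "\<forall>t\<in>{0..T}. \<bar>w n t\<bar> \<le> B * M ^ n * t ^ n / fact n" for n
    by (rule iter_bound[OF cw B wS])
  define Mk where "Mk n = B * ((M * T) ^ n / fact n)" for n
  have wMk: "norm (w n t) \<le> Mk n" if t: "t \<in> {0..T}" for n t
  proof -
    have "\<bar>w n t\<bar> \<le> B * M ^ n * t ^ n / fact n" using wb t by auto
    also have "\<dots> \<le> B * M ^ n * T ^ n / fact n"
      using t B0 M0 by (intro divide_right_mono mult_left_mono power_mono) auto
    also have "\<dots> = Mk n" unfolding Mk_def by (simp add: power_mult_distrib)
    finally show ?thesis by simp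
  qed
  have sMk: "summable Mk"
  proof -
    have "summable (\<lambda>n. inverse (fact n) * (M * T) ^ n)" by (rule summable_exp)
    hence "summable (\<lambda>n. (M * T) ^ n / fact n)" by (simp add: divide_inverse mult.commute)
    thus ?thesis unfolding Mk_def by (rule summable_mult)
  qed
  have ul: "uniform_limit {0..T} (\<lambda>n t. \<Sum>i<n. w i t) (\<lambda>t. \<Sum>i. w i t) sequentially"
    by (rule Weierstrass_m_test[OF wMk sMk])
  define S where "S t = (\<Sum>i. w i t)" for t
  define z where "z t = f t + S t" for t
  have cS: "continuous_on {0..T} S"
    unfolding S_def
    by (rule uniform_limit_theorem[OF _ ul]) (auto intro!: always_eventually continuous_on_sum cw)
  have cz': "continuous_on {0..T} z" unfolding z_def using cf cS by (auto intro!: continuous_intros)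
  have tel: "zs n t = f t + (\<Sum>i<n. w i t)" for n t
    by (induction n) (auto simp: zs0 w_def)
  have eqn: "z t = A z t + f t" if t: "t \<in> {0..T}" for t
  proof -
    have "\<bar>z t - (A z t + f t)\<bar> \<le> e * (1 + M * T)" if e: "e > 0" for e
    proof -
      obtain N where N: "\<forall>n\<ge>N. \<forall>x\<in>{0..T}. dist (\<Sum>i<n. w i x) (\<Sum>i. w i x) < e"
        using ul e unfolding uniform_limit_sequentially_iff by blast
      have close: "\<bar>zs n s - z s\<bar> < e" if "n \<ge> N" "s \<in> {0..T}" for n s
        using N that unfolding tel z_def S_def by (auto simp: dist_real_def)
      have d: "continuous_on {0..T} (\<lambda>s. zs N s - z s)" using cz cz' by (auto intro!: continuous_intros)
      have "\<bar>A (\<lambda>s. zs N s - z s) t\<bar> \<le> M * integral {0..t} (\<lambda>s. e)"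
        by (rule A_bound[OF d t]) (use close t in \<open>auto intro: less_imp_le\<close>)
      also have "\<dots> = M * (e * t)" using t by simp
      also have "\<dots> \<le> M * (e * T)" using t e M0 by (intro mult_left_mono) auto
      finally have a1: "\<bar>A (zs N) t - A z t\<bar> \<le> M * (e * T)"
        using A_diff[OF cz cz', of t N] t by simp
      have a2: "\<bar>zs (Suc N) t - z t\<bar> < e" using close[of "Suc N" t] t by simp
      have "zs (Suc N) t = A (zs N) t + f t" unfolding zsS by simp
      hence "\<bar>z t - (A z t + f t)\<bar> \<le> \<bar>zs (Suc N) t - z t\<bar> + \<bar>A (zs N) t - A z t\<bar>" by linarith
      also have "\<dots> \<le> e + M * (e * T)" using a1 a2 by linarith
      finally show ?thesis by (simp add: algebra_simps)
    qed
    hence "z t - (A z t + f t) = 0"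
      by (intro small_zero[of "1 + M * T"]) (use M0 T in \<open>auto intro: add_pos_nonneg\<close>)
    thus ?thesis by simp
  qed
  show ?thesis using cz' eqn by blast
qed

end



context sol_data
begin

lemma comb:
  assumes t: "t \<in> {0..T}"
  shows "((\<lambda>s. (d * ml_e \<alpha> (\<alpha> + 2) lam (t - s) - c * (t - s)) * ddu s) has_integral
          (d * integral {0..t} (\<lambda>s. ml_e \<alpha> (\<alpha> + 2) lam (t - s) * ddu s) - c * (u t - u 0 - du 0 * t))) {0..t}"
proof -
  have sub: "{0..t} \<subseteq> {0..T}" using t by auto
  have tT: "t \<le> T" using t by auto
  have ce2: "continuous_on {0..t} (\<lambda>s. ml_e \<alpha> (\<alpha> + 2) lam (t - s))"
    by (rule ml_e_cont_shift[OF a0 a1 _ tT]) (use a0 in simp)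
  have "(\<lambda>s. ml_e \<alpha> (\<alpha> + 2) lam (t - s) * ddu s) integrable_on {0..t}"
    by (rule integrable_continuous_interval)
       (use continuous_on_subset[OF C sub] ce2 in \<open>auto intro!: continuous_intros\<close>)
  hence I2: "((\<lambda>s. ml_e \<alpha> (\<alpha> + 2) lam (t - s) * ddu s) has_integral
              integral {0..t} (\<lambda>s. ml_e \<alpha> (\<alpha> + 2) lam (t - s) * ddu s)) {0..t}"
    by (simp add: integrable_integral)
  have "((\<lambda>s. d * (ml_e \<alpha> (\<alpha> + 2) lam (t - s) * ddu s) - c * ((t - s) * ddu s)) has_integral
          (d * integral {0..t} (\<lambda>s. ml_e \<alpha> (\<alpha> + 2) lam (t - s) * ddu s) - c * (u t - u 0 - du 0 * t))) {0..t}"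
    by (intro has_integral_diff has_integral_mult_right I2 taylor t)
  thus ?thesis by (simp add: algebra_simps)
qed

end

lemma part1:
  fixes T \<alpha> c d lam u0 u1 :: real
  assumes a0: "0 < \<alpha>" and a1: "\<alpha> < 1"
    and sol: "is_solution_with T \<alpha> c d lam u0 u1 u du ddu"
  shows "\<forall>t\<in>{0<..T}. ddu t =
               integral {0..t} (\<lambda>s. (d * ml_e \<alpha> (\<alpha> + 2) lam (t - s) - c * (t - s)) * ddu s)
               + (d * u0 * ml_e \<alpha> (\<alpha> + 1) lam t + d * u1 * ml_e \<alpha> (\<alpha> + 2) lam t
                  - c * u1 * t - c * u0)"
proof
  fix t assume t: "t \<in> {0<..T}"
  interpret sol_data T \<alpha> lam u du ddu
    using sol a0 a1 unfolding is_solution_with_def by unfold_locales auto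
  have u00: "u 0 = u0" "du 0 = u1" using sol unfolding is_solution_with_def by auto
  have eq: "ddu t + c * u t = d * integral {0..t} (\<lambda>s. ml_e \<alpha> \<alpha> lam (t - s) * u s)"
    using sol t unfolding is_solution_with_def by auto
  have bp: "integral {0..t} (\<lambda>s. ml_e \<alpha> \<alpha> lam (t - s) * u s) =
      u 0 * ml_e \<alpha> (\<alpha> + 1) lam t + du 0 * ml_e \<alpha> (\<alpha> + 2) lam t
            + integral {0..t} (\<lambda>s. ml_e \<alpha> (\<alpha> + 2) lam (t - s) * ddu s)"
    by (rule integral_unique[OF byparts[OF t]])
  have cb: "integral {0..t} (\<lambda>s. (d * ml_e \<alpha> (\<alpha> + 2) lam (t - s) - c * (t - s)) * ddu s) =
      d * integral {0..t} (\<lambda>s. ml_e \<alpha> (\<alpha> + 2) lam (t - s) * ddu s) - c * (u t - u 0 - du 0 * t)"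
    by (rule integral_unique[OF comb]) (use t in auto)
  show "ddu t =
               integral {0..t} (\<lambda>s. (d * ml_e \<alpha> (\<alpha> + 2) lam (t - s) - c * (t - s)) * ddu s)
               + (d * u0 * ml_e \<alpha> (\<alpha> + 1) lam t + d * u1 * ml_e \<alpha> (\<alpha> + 2) lam t
                  - c * u1 * t - c * u0)"
    unfolding cb using eq unfolding bp u00 by (simp add: algebra_simps)
qed



theorem lemma3p1:
  fixes T \<alpha> c d lam u0 u1 :: real
  assumes "T > 0" and "0 < \<alpha>" and "\<alpha> < 1" and "c > 0" and "d > 0" and "lam > 0"
  shows "(\<forall>u du ddu. is_solution_with T \<alpha> c d lam u0 u1 u du ddu \<longrightarrow>
            (\<forall>t\<in>{0<..T}. ddu t =
               integral {0..t} (\<lambda>s. (d * ml_e \<alpha> (\<alpha> + 2) lam (t - s) - c * (t - s)) * ddu s)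
               + (d * u0 * ml_e \<alpha> (\<alpha> + 1) lam t + d * u1 * ml_e \<alpha> (\<alpha> + 2) lam t
                  - c * u1 * t - c * u0)))
         \<and> (\<exists>u. is_solution T \<alpha> c d lam u0 u1 u)
         \<and> (\<forall>u v. is_solution T \<alpha> c d lam u0 u1 u \<longrightarrow> is_solution T \<alpha> c d lam u0 u1 v
                \<longrightarrow> (\<forall>t\<in>{0..T}. u t = v t))"
proof -
  note T = assms(1) and a0 = assms(2) and a1 = assms(3)
  define K where "K r = d * ml_e \<alpha> (\<alpha> + 2) lam r - c * r" for r
  define f where "f t = d * u0 * ml_e \<alpha> (\<alpha> + 1) lam t + d * u1 * ml_e \<alpha> (\<alpha> + 2) lam t
                  - c * u1 * t - c * u0" for t
  have ce2: "continuous_on {0..T} (ml_e \<alpha> (\<alpha> + 2) lam)"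
    by (rule continuous_on_subset[OF ml_e_cont[OF a0 a1]]) (use a0 in auto)
  have ce1: "continuous_on {0..T} (ml_e \<alpha> (\<alpha> + 1) lam)"
    by (rule continuous_on_subset[OF ml_e_cont[OF a0 a1]]) (use a0 in auto)
  have cK: "continuous_on {0..T} K" unfolding K_def[abs_def] using ce2 by (auto intro!: continuous_intros)
  have cf: "continuous_on {0..T} f" unfolding f_def[abs_def] using ce1 ce2 by (auto intro!: continuous_intros)
  obtain M where M: "\<forall>r\<in>{0..T}. \<bar>K r\<bar> \<le> M" using cont_bounded[OF cK] by auto
  interpret volt T M K
    by unfold_locales (use T cK M in \<open>auto simp: K_def\<close>)
  have Aeq: "A z t = integral {0..t} (\<lambda>s. (d * ml_e \<alpha> (\<alpha> + 2) lam (t - s) - c * (t - s)) * z s)" for z t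
    unfolding A_def K_def ..
  have P1: "\<forall>u du ddu. is_solution_with T \<alpha> c d lam u0 u1 u du ddu \<longrightarrow>
            (\<forall>t\<in>{0<..T}. ddu t =
               integral {0..t} (\<lambda>s. (d * ml_e \<alpha> (\<alpha> + 2) lam (t - s) - c * (t - s)) * ddu s)
               + (d * u0 * ml_e \<alpha> (\<alpha> + 1) lam t + d * u1 * ml_e \<alpha> (\<alpha> + 2) lam t
                  - c * u1 * t - c * u0))"
    using part1[OF a0 a1] by blast
  have P1': "\<forall>t\<in>{0<..T}. ddu t = A ddu t + f t" if "is_solution_with T \<alpha> c d lam u0 u1 u du ddu" for u du ddu
    using P1 that unfolding Aeq f_def by blast
  obtain z where cz: "continuous_on {0..T} z" and ze: "\<forall>t\<in>{0..T}. z t = A z t + f t"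
    using exist[OF cf] by blast
  define Z1 where "Z1 t = integral {0..t} z" for t
  define Z2 where "Z2 t = integral {0..t} (\<lambda>s. s * z s)" for t
  define u where "u t = u0 + u1 * t + t * Z1 t - Z2 t" for t
  define du where "du t = u1 + Z1 t" for t
  have csz: "continuous_on {0..T} (\<lambda>s. s * z s)" using cz by (auto intro!: continuous_intros)
  have dZ1: "(Z1 has_real_derivative z t) (at t within {0..T})" if "t \<in> {0..T}" for t
    unfolding Z1_def[abs_def] has_real_derivative_iff_has_vector_derivative
    by (rule integral_has_vector_derivative[OF cz that])
  have dZ2: "(Z2 has_real_derivative t * z t) (at t within {0..T})" if "t \<in> {0..T}" for t
    unfolding Z2_def[abs_def] has_real_derivative_iff_has_vector_derivative
    using integral_has_vector_derivative[OF csz that] by simp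
  have D1: "(u has_real_derivative du t) (at t within {0..T})" if t: "t \<in> {0..T}" for t
  proof -
    have l: "((\<lambda>t. u0 + u1 * t) has_real_derivative u1) (at t within {0..T})"
      by (auto intro!: derivative_eq_intros)
    have m: "((\<lambda>t. t * Z1 t) has_real_derivative 1 * Z1 t + z t * t) (at t within {0..T})"
      by (rule DERIV_mult[OF DERIV_ident dZ1[OF t]])
    have "(u has_real_derivative u1 + (1 * Z1 t + z t * t) - t * z t) (at t within {0..T})"
      unfolding u_def[abs_def] by (rule DERIV_diff[OF DERIV_add[OF l m] dZ2[OF t]])
    thus ?thesis unfolding du_def by simp
  qed
  have D2: "(du has_real_derivative z t) (at t within {0..T})" if t: "t \<in> {0..T}" for t
  proof -
    have "(du has_real_derivative 0 + z t) (at t within {0..T})"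
      unfolding du_def[abs_def] by (rule DERIV_add[OF DERIV_const dZ1[OF t]])
    thus ?thesis by simp
  qed
  interpret S: sol_data T \<alpha> lam u du z
    by unfold_locales (use a0 a1 D1 D2 cz in auto)
  have u0': "u 0 = u0" "du 0 = u1" unfolding u_def du_def Z1_def Z2_def by simp_all
  have eqn: "z t + c * u t = d * integral {0..t} (\<lambda>s. ml_e \<alpha> \<alpha> lam (t - s) * u s)"
    if t: "t \<in> {0<..T}" for t
  proof -
    have bp: "integral {0..t} (\<lambda>s. ml_e \<alpha> \<alpha> lam (t - s) * u s) =
      u 0 * ml_e \<alpha> (\<alpha> + 1) lam t + du 0 * ml_e \<alpha> (\<alpha> + 2) lam t
            + integral {0..t} (\<lambda>s. ml_e \<alpha> (\<alpha> + 2) lam (t - s) * z s)"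
      by (rule integral_unique[OF S.byparts[OF t]])
    have cb: "A z t =
      d * integral {0..t} (\<lambda>s. ml_e \<alpha> (\<alpha> + 2) lam (t - s) * z s) - c * (u t - u 0 - du 0 * t)"
      unfolding Aeq by (rule integral_unique[OF S.comb]) (use t in auto)
    have "z t = A z t + f t" using ze t by auto
    thus ?thesis unfolding cb bp u0' f_def by (simp add: algebra_simps)
  qed
  have ex: "\<exists>u. is_solution T \<alpha> c d lam u0 u1 u"
    unfolding is_solution_def is_solution_with_def
    using D1 D2 cz eqn u0' by blast
  have un: "\<forall>t\<in>{0..T}. u t = v t"
    if su: "is_solution T \<alpha> c d lam u0 u1 u" and sv: "is_solution T \<alpha> c d lam u0 u1 v" for u v
  proof -
    obtain du ddu where su': "is_solution_with T \<alpha> c d lam u0 u1 u du ddu"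
      using su unfolding is_solution_def by blast
    obtain dv ddv where sv': "is_solution_with T \<alpha> c d lam u0 u1 v dv ddv"
      using sv unfolding is_solution_def by blast
    interpret U: sol_data T \<alpha> lam u du ddu
      using su' a0 a1 unfolding is_solution_with_def by unfold_locales auto
    interpret V: sol_data T \<alpha> lam v dv ddv
      using sv' a0 a1 unfolding is_solution_with_def by unfold_locales auto
    have same: "\<forall>t\<in>{0..T}. ddu t = ddv t"
      by (rule uniq[OF U.C V.C P1'[OF su'] P1'[OF sv']])
    have i0: "u 0 = u0" "du 0 = u1" "v 0 = u0" "dv 0 = u1"
      using su' sv' unfolding is_solution_with_def by auto
    show ?thesis
    proof
      fix t assume t: "t \<in> {0..T}"
      have "integral {0..t} (\<lambda>s. (t - s) * ddu s) = integral {0..t} (\<lambda>s. (t - s) * ddv s)"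
        by (rule integral_cong) (use same t in auto)
      moreover have "integral {0..t} (\<lambda>s. (t - s) * ddu s) = u t - u 0 - du 0 * t"
        by (rule integral_unique[OF U.taylor[OF t]])
      moreover have "integral {0..t} (\<lambda>s. (t - s) * ddv s) = v t - v 0 - dv 0 * t"
        by (rule integral_unique[OF V.taylor[OF t]])
      ultimately show "u t = v t" using i0 by simp
    qed
  qed
  show ?thesis using P1 ex un by blast
qed


end
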